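(* Let $(\gamma,v_1,v_2):I\to H^3\times\Delta_5$ be a hyperbolic framed curve with $a^2+b^2\neq0$ and $M^2>A^2$ on $I$, and let $\mathcal{F}^d$ be its de Sitter focal surface. Let $t_0\in I$. If $(MA'-AM',N)(t_0)=(0,0)$, then every point $(t_0,\theta)$ is a singular point of $\mathcal{F}^d$. If $(MA'-AM',N)(t_0)\neq(0,0)$, then there exists a singular point of $\mathcal{F}^d$ of the form $(t_0,\theta_0)$.
   Context: $\mathbb{R}^4_1$ denotes $\mathbb{R}^4$ with $\langle x,y\rangle=-x_0y_0+x_1y_1+x_2y_2+x_3y_3$; $H^3=\{x:\langle x,x\rangle=-1\}$, $S^3_1=\{x:\langle x,x\rangle=1\}$. For $x^1,x^2,x^3\in\mathbb{R}^4_1$, $x^1\wedge x^2\wedge x^3$ is the vector given by the formal determinant with first row $(-e_0,e_1,e_2,e_3)$ and the components of $x^1,x^2,x^3$ as remaining rows. Let $\Delta_5=\{(v_1,v_2)\in S^3_1\times S^3_1:\langle v_1,v_2\rangle=0\}$. A hyperbolic framed curve is a smooth map $(\gamma,v_1,v_2):I\to H^3\times\Delta_5$ with $\langle\gamma,v_i\rangle=\langle\gamma',v_i\rangle=0$. Put $\mu=\gamma\wedge v_1\wedge v_2$; then $\gamma'=m\mu$, $v_1'=nv_2+a\mu$, $v_2'=-nv_1+b\mu$, $\mu'=m\gamma-av_1-bv_2$ with $m=\langle\gamma',\mu\rangle$, $n=\langle v_1',v_2\rangle$, $a=\langle v_1',\mu\rangle$, $b=\langle v_2',\mu\rangle$.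 Put $f=ab'-a'b+n(a^2+b^2)$. With $a^2+b^2\neq0$, the Frenet type frame is $n_1=(av_1+bv_2)/\sqrt{a^2+b^2}$, $n_2=(-bv_1+av_2)/\sqrt{a^2+b^2}$, giving $\gamma'=M\mu$, $n_1'=Nn_2+A\mu$, $n_2'=-Nn_1$, $\mu'=M\gamma-An_1$ with $M=m$, $N=f/(a^2+b^2)$, $A=\sqrt{a^2+b^2}$. The de Sitter focal surface ($M^2>A^2$) is $\mathcal{F}^d:I\times[0,2\pi]\to S^3_1$, $\mathcal{F}^d(t,\theta)=\frac{\cos\theta}{\sqrt{M^2-A^2}}(A\gamma-Mn_1)+\sin\theta\,n_2$. A singular point is a point where $d\mathcal{F}^d$ has rank $<2$; the singular set is the zero set of $\lambda^d=\det(\mathcal{F}^d,\mathcal{F}^d_t,\mathcal{F}^d_\theta,\mu)=\frac{\cos\theta(MA'-AM')-\sin\theta\,AN\sqrt{M^2-A^2}}{M^2-A^2}$. *)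

theory Defs
  imports "HOL-Analysis.Analysis"
begin

definition lor :: "real^4 \<Rightarrow> real^4 \<Rightarrow> real" where
  "lor x y = - x$0 * y$0 + x$1 * y$1 + x$2 * y$2 + x$3 * y$3"

definition det3 :: "real \<Rightarrow> real \<Rightarrow> real \<Rightarrow> real \<Rightarrow> real \<Rightarrow> real \<Rightarrow> real \<Rightarrow> real \<Rightarrow> real \<Rightarrow> real" where
  "det3 a1 a2 a3 b1 b2 b3 c1 c2 c3 =
     a1 * (b2 * c3 - b3 * c2) - a2 * (b1 * c3 - b3 * c1) + a3 * (b1 * c2 - b2 * c1)"

text \<open>Wedge product: cofactor expansion of the formal determinant with first row
  (-e0, e1, e2, e3) along the first row. With D_j the minor obtained by deleting
  column j, the determinant is -e0 D0 - e1 D1 + e2 D2 - e3 D3.\<close>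
definition wedge :: "real^4 \<Rightarrow> real^4 \<Rightarrow> real^4 \<Rightarrow> real^4" where
  "wedge x y z = (\<chi> i.
     if i = 0 then - det3 (x$1) (x$2) (x$3) (y$1) (y$2) (y$3) (z$1) (z$2) (z$3)
     else if i = 1 then - det3 (x$0) (x$2) (x$3) (y$0) (y$2) (y$3) (z$0) (z$2) (z$3)
     else if i = 2 then det3 (x$0) (x$1) (x$3) (y$0) (y$1) (y$3) (z$0) (z$1) (z$3)
     else - det3 (x$0) (x$1) (x$2) (y$0) (y$1) (y$2) (z$0) (z$1) (z$2))"

definition H3 :: "(real^4) set" where "H3 = {x. lor x x = -1}"
definition S31 :: "(real^4) set" where "S31 = {x. lor x x = 1}"
definition Delta5 :: "((real^4) \<times> (real^4)) set" where
  "Delta5 = {(u, w). u \<in> S31 \<and> w \<in> S31 \<and> lor u w = 0}"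

definition vd :: "(real \<Rightarrow> real^4) \<Rightarrow> real \<Rightarrow> real^4" where
  "vd f t = vector_derivative f (at t)"

definition smooth_on :: "real set \<Rightarrow> (real \<Rightarrow> real^4) \<Rightarrow> bool" where
  "smooth_on I f \<longleftrightarrow> (\<forall>k. \<forall>t\<in>I. ((vd ^^ k) f) differentiable (at t))"

definition hyp_framed_curve ::
  "real set \<Rightarrow> (real \<Rightarrow> real^4) \<Rightarrow> (real \<Rightarrow> real^4) \<Rightarrow> (real \<Rightarrow> real^4) \<Rightarrow> bool" where
  "hyp_framed_curve I \<gamma> v1 v2 \<longleftrightarrow>
     smooth_on I \<gamma> \<and> smooth_on I v1 \<and> smooth_on I v2 \<and>
     (\<forall>t\<in>I. \<gamma> t \<in> H3 \<and> (v1 t, v2 t) \<in> Delta5 \<and>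
        lor (\<gamma> t) (v1 t) = 0 \<and> lor (\<gamma> t) (v2 t) = 0 \<and>
        lor (vd \<gamma> t) (v1 t) = 0 \<and> lor (vd \<gamma> t) (v2 t) = 0)"

definition mu :: "(real \<Rightarrow> real^4) \<Rightarrow> (real \<Rightarrow> real^4) \<Rightarrow> (real \<Rightarrow> real^4) \<Rightarrow> real \<Rightarrow> real^4" where
  "mu \<gamma> v1 v2 t = wedge (\<gamma> t) (v1 t) (v2 t)"

definition cm :: "(real \<Rightarrow> real^4) \<Rightarrow> (real \<Rightarrow> real^4) \<Rightarrow> (real \<Rightarrow> real^4) \<Rightarrow> real \<Rightarrow> real" where
  "cm \<gamma> v1 v2 t = lor (vd \<gamma> t) (mu \<gamma> v1 v2 t)"
definition cn :: "(real \<Rightarrow> real^4) \<Rightarrow> (real \<Rightarrow> real^4) \<Rightarrow> (real \<Rightarrow> real^4) \<Rightarrow> real \<Rightarrow> real" where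
  "cn \<gamma> v1 v2 t = lor (vd v1 t) (v2 t)"
definition ca :: "(real \<Rightarrow> real^4) \<Rightarrow> (real \<Rightarrow> real^4) \<Rightarrow> (real \<Rightarrow> real^4) \<Rightarrow> real \<Rightarrow> real" where
  "ca \<gamma> v1 v2 t = lor (vd v1 t) (mu \<gamma> v1 v2 t)"
definition cb :: "(real \<Rightarrow> real^4) \<Rightarrow> (real \<Rightarrow> real^4) \<Rightarrow> (real \<Rightarrow> real^4) \<Rightarrow> real \<Rightarrow> real" where
  "cb \<gamma> v1 v2 t = lor (vd v2 t) (mu \<gamma> v1 v2 t)"

definition cf :: "(real \<Rightarrow> real^4) \<Rightarrow> (real \<Rightarrow> real^4) \<Rightarrow> (real \<Rightarrow> real^4) \<Rightarrow> real \<Rightarrow> real" where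
  "cf \<gamma> v1 v2 t =
     ca \<gamma> v1 v2 t * deriv (cb \<gamma> v1 v2) t - deriv (ca \<gamma> v1 v2) t * cb \<gamma> v1 v2 t
     + cn \<gamma> v1 v2 t * ((ca \<gamma> v1 v2 t)\<^sup>2 + (cb \<gamma> v1 v2 t)\<^sup>2)"

definition cM :: "(real \<Rightarrow> real^4) \<Rightarrow> (real \<Rightarrow> real^4) \<Rightarrow> (real \<Rightarrow> real^4) \<Rightarrow> real \<Rightarrow> real" where
  "cM \<gamma> v1 v2 t = cm \<gamma> v1 v2 t"
definition cN :: "(real \<Rightarrow> real^4) \<Rightarrow> (real \<Rightarrow> real^4) \<Rightarrow> (real \<Rightarrow> real^4) \<Rightarrow> real \<Rightarrow> real" where
  "cN \<gamma> v1 v2 t = cf \<gamma> v1 v2 t / ((ca \<gamma> v1 v2 t)\<^sup>2 + (cb \<gamma> v1 v2 t)\<^sup>2)"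
definition cA :: "(real \<Rightarrow> real^4) \<Rightarrow> (real \<Rightarrow> real^4) \<Rightarrow> (real \<Rightarrow> real^4) \<Rightarrow> real \<Rightarrow> real" where
  "cA \<gamma> v1 v2 t = sqrt ((ca \<gamma> v1 v2 t)\<^sup>2 + (cb \<gamma> v1 v2 t)\<^sup>2)"

definition fn1 :: "(real \<Rightarrow> real^4) \<Rightarrow> (real \<Rightarrow> real^4) \<Rightarrow> (real \<Rightarrow> real^4) \<Rightarrow> real \<Rightarrow> real^4" where
  "fn1 \<gamma> v1 v2 t = (1 / cA \<gamma> v1 v2 t) *\<^sub>R (ca \<gamma> v1 v2 t *\<^sub>R v1 t + cb \<gamma> v1 v2 t *\<^sub>R v2 t)"
definition fn2 :: "(real \<Rightarrow> real^4) \<Rightarrow> (real \<Rightarrow> real^4) \<Rightarrow> (real \<Rightarrow> real^4) \<Rightarrow> real \<Rightarrow> real^4" where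
  "fn2 \<gamma> v1 v2 t = (1 / cA \<gamma> v1 v2 t) *\<^sub>R (- cb \<gamma> v1 v2 t *\<^sub>R v1 t + ca \<gamma> v1 v2 t *\<^sub>R v2 t)"

definition focal_dS :: "(real \<Rightarrow> real^4) \<Rightarrow> (real \<Rightarrow> real^4) \<Rightarrow> (real \<Rightarrow> real^4) \<Rightarrow> real \<times> real \<Rightarrow> real^4" where
  "focal_dS \<gamma> v1 v2 = (\<lambda>(t, \<theta>).
     (cos \<theta> / sqrt ((cM \<gamma> v1 v2 t)\<^sup>2 - (cA \<gamma> v1 v2 t)\<^sup>2)) *\<^sub>R
        (cA \<gamma> v1 v2 t *\<^sub>R \<gamma> t - cM \<gamma> v1 v2 t *\<^sub>R fn1 \<gamma> v1 v2 t)
     + sin \<theta> *\<^sub>R fn2 \<gamma> v1 v2 t)"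

text \<open>(t,\<theta>) is a singular point of a map F of two variables if its differential,
  whose columns are the partial derivatives F_t and F_\<theta>, has rank < 2,
  i.e. the two partial derivatives are linearly dependent.\<close>
definition singular_point :: "(real \<times> real \<Rightarrow> real^4) \<Rightarrow> real \<times> real \<Rightarrow> bool" where
  "singular_point F p \<longleftrightarrow>
     (let Ft = vector_derivative (\<lambda>s. F (s, snd p)) (at (fst p));
          F\<theta> = vector_derivative (\<lambda>\<phi>. F (fst p, \<phi>)) (at (snd p))
      in \<exists>c1 c2. (c1, c2) \<noteq> (0, 0) \<and> c1 *\<^sub>R Ft + c2 *\<^sub>R F\<theta> = 0)"

end

theory Submission
  imports Defs
begin


lemma wedge_comp:
  "wedge x y z $ 0 = - det3 (x$1) (x$2) (x$3) (y$1) (y$2) (y$3) (z$1) (z$2) (z$3)"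
  "wedge x y z $ 1 = - det3 (x$0) (x$2) (x$3) (y$0) (y$2) (y$3) (z$0) (z$2) (z$3)"
  "wedge x y z $ 2 = det3 (x$0) (x$1) (x$3) (y$0) (y$1) (y$3) (z$0) (z$1) (z$3)"
  "wedge x y z $ 3 = - det3 (x$0) (x$1) (x$2) (y$0) (y$1) (y$2) (z$0) (z$1) (z$2)"
  by (simp_all add: wedge_def)

lemma lor_comm: "lor x y = lor y x" unfolding lor_def by simp

lemma wedge_orth: "lor (wedge x y z) x = 0" "lor (wedge x y z) y = 0" "lor (wedge x y z) z = 0"
  by (simp_all add: lor_def wedge_comp det3_def; algebra)+

lemma wedge_norm:
  "lor (wedge x y z) (wedge x y z) = - (lor x x * (lor y y * lor z z - lor y z * lor y z) - lor x y * (lor x y * lor z z - lor y z * lor x z) + lor x z * (lor x y * lor y z - lor y y * lor x z))"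
  unfolding lor_def wedge_comp det3_def by algebra

lemma idx4: "(i::4) = 0 \<or> i = 1 \<or> i = 2 \<or> i = 3"
  using exhaust_4[of i] by auto

lemma gen_comp0:
  fixes x y z u :: "real^4"
  shows "(lor x x * (lor y y * lor z z - lor y z * lor y z) - lor x y * (lor x y * lor z z - lor y z * lor x z) + lor x z * (lor x y * lor y z - lor y y * lor x z)) * u$0 = 
   ((lor y y * lor z z - lor y z * lor y z) * lor u x + (lor x z * lor y z - lor x y * lor z z) * lor u y + (lor x y * lor y z - lor y y * lor x z) * lor u z) * x$0
 + ((lor x z * lor y z - lor x y * lor z z) * lor u x + (lor x x * lor z z - lor x z * lor x z) * lor u y + (lor x y * lor x z - lor x x * lor y z) * lor u z) * y$0
 + ((lor x y * lor y z - lor y y * lor x z) * lor u x + (lor x y * lor x z - lor x x * lor y z) * lor u y + (lor x x * lor y y - lor x y * lor x y) * lor u z) * z$0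
 - lor u (wedge x y z) * (wedge x y z)$0"
  unfolding lor_def wedge_comp det3_def by algebra

lemma gen_comp1:
  fixes x y z u :: "real^4"
  shows "(lor x x * (lor y y * lor z z - lor y z * lor y z) - lor x y * (lor x y * lor z z - lor y z * lor x z) + lor x z * (lor x y * lor y z - lor y y * lor x z)) * u$1 = 
   ((lor y y * lor z z - lor y z * lor y z) * lor u x + (lor x z * lor y z - lor x y * lor z z) * lor u y + (lor x y * lor y z - lor y y * lor x z) * lor u z) * x$1
 + ((lor x z * lor y z - lor x y * lor z z) * lor u x + (lor x x * lor z z - lor x z * lor x z) * lor u y + (lor x y * lor x z - lor x x * lor y z) * lor u z) * y$1
 + ((lor x y * lor y z - lor y y * lor x z) * lor u x + (lor x y * lor x z - lor x x * lor y z) * lor u y + (lor x x * lor y y - lor x y * lor x y) * lor u z) * z$1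
 - lor u (wedge x y z) * (wedge x y z)$1"
  unfolding lor_def wedge_comp det3_def by algebra

lemma gen_comp2:
  fixes x y z u :: "real^4"
  shows "(lor x x * (lor y y * lor z z - lor y z * lor y z) - lor x y * (lor x y * lor z z - lor y z * lor x z) + lor x z * (lor x y * lor y z - lor y y * lor x z)) * u$2 = 
   ((lor y y * lor z z - lor y z * lor y z) * lor u x + (lor x z * lor y z - lor x y * lor z z) * lor u y + (lor x y * lor y z - lor y y * lor x z) * lor u z) * x$2
 + ((lor x z * lor y z - lor x y * lor z z) * lor u x + (lor x x * lor z z - lor x z * lor x z) * lor u y + (lor x y * lor x z - lor x x * lor y z) * lor u z) * y$2
 + ((lor x y * lor y z - lor y y * lor x z) * lor u x + (lor x y * lor x z - lor x x * lor y z) * lor u y + (lor x x * lor y y - lor x y * lor x y) * lor u z) * z$2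
 - lor u (wedge x y z) * (wedge x y z)$2"
  unfolding lor_def wedge_comp det3_def by algebra

lemma gen_comp3:
  fixes x y z u :: "real^4"
  shows "(lor x x * (lor y y * lor z z - lor y z * lor y z) - lor x y * (lor x y * lor z z - lor y z * lor x z) + lor x z * (lor x y * lor y z - lor y y * lor x z)) * u$3 = 
   ((lor y y * lor z z - lor y z * lor y z) * lor u x + (lor x z * lor y z - lor x y * lor z z) * lor u y + (lor x y * lor y z - lor y y * lor x z) * lor u z) * x$3
 + ((lor x z * lor y z - lor x y * lor z z) * lor u x + (lor x x * lor z z - lor x z * lor x z) * lor u y + (lor x y * lor x z - lor x x * lor y z) * lor u z) * y$3
 + ((lor x y * lor y z - lor y y * lor x z) * lor u x + (lor x y * lor x z - lor x x * lor y z) * lor u y + (lor x x * lor y y - lor x y * lor x y) * lor u z) * z$3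
 - lor u (wedge x y z) * (wedge x y z)$3"
  unfolding lor_def wedge_comp det3_def by algebra

lemma gen_comp:
  fixes x y z u :: "real^4" and k :: 4
  shows "(lor x x * (lor y y * lor z z - lor y z * lor y z) - lor x y * (lor x y * lor z z - lor y z * lor x z) + lor x z * (lor x y * lor y z - lor y y * lor x z)) * u$k = 
   ((lor y y * lor z z - lor y z * lor y z) * lor u x + (lor x z * lor y z - lor x y * lor z z) * lor u y + (lor x y * lor y z - lor y y * lor x z) * lor u z) * x$k
 + ((lor x z * lor y z - lor x y * lor z z) * lor u x + (lor x x * lor z z - lor x z * lor x z) * lor u y + (lor x y * lor x z - lor x x * lor y z) * lor u z) * y$k
 + ((lor x y * lor y z - lor y y * lor x z) * lor u x + (lor x y * lor x z - lor x x * lor y z) * lor u y + (lor x x * lor y y - lor x y * lor x y) * lor u z) * z$k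
 - lor u (wedge x y z) * (wedge x y z)$k"
  using idx4[of k] gen_comp0[of x y z u] gen_comp1[of x y z u] gen_comp2[of x y z u] gen_comp3[of x y z u]
  by (elim disjE) simp_all

lemma frame_expand:
  fixes x y z u :: "real^4"
  assumes "lor x x = -1" "lor y y = 1" "lor z z = 1" "lor x y = 0" "lor x z = 0" "lor y z = 0"
  shows "u = - lor u x *\<^sub>R x + lor u y *\<^sub>R y + lor u z *\<^sub>R z + lor u (wedge x y z) *\<^sub>R wedge x y z"
proof -
  have "\<forall>k. u $ k = (- lor u x *\<^sub>R x + lor u y *\<^sub>R y + lor u z *\<^sub>R z + lor u (wedge x y z) *\<^sub>R wedge x y z) $ k"
  proof
    fix k :: 4
    have "-1 * u$k = lor u x * x$k + (-1) * lor u y * y$k + (-1) * lor u z * z$k - lor u (wedge x y z) * (wedge x y z)$k"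
      using gen_comp[of x y z u k] assms by simp
    then show "u $ k = (- lor u x *\<^sub>R x + lor u y *\<^sub>R y + lor u z *\<^sub>R z + lor u (wedge x y z) *\<^sub>R wedge x y z) $ k"
      by simp
  qed
  then show ?thesis by (simp add: vec_eq_iff)
qed

lemma wedge_norm1:
  assumes "lor x x = -1" "lor y y = 1" "lor z z = 1" "lor x y = 0" "lor x z = 0" "lor y z = 0"
  shows "lor (wedge x y z) (wedge x y z) = 1"
  using wedge_norm[of x y z] assms by simp



lemma comp_deriv:
  assumes "(f has_vector_derivative f') (at t)"
  shows "((\<lambda>s. f s $ i) has_real_derivative f' $ i) (at t)"
proof -
  have "((\<lambda>s. f s $ i) has_vector_derivative f' $ i) (at t)"
    using bounded_linear.has_vector_derivative[OF bounded_linear_vec_nth assms] .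
  then show ?thesis by (simp add: has_real_derivative_iff_has_vector_derivative)
qed

lemma lor_deriv:
  assumes f: "(f has_vector_derivative f') (at t)" and g: "(g has_vector_derivative g') (at t)"
  shows "((\<lambda>s. lor (f s) (g s)) has_real_derivative (lor f' (g t) + lor (f t) g')) (at t)"
  unfolding lor_def
  apply (rule derivative_eq_intros comp_deriv[OF f] comp_deriv[OF g] refl)+
  by (simp add: algebra_simps)

lemma vec4_axis: "(v::real^4) = v$0 *\<^sub>R axis 0 1 + v$1 *\<^sub>R axis 1 1 + v$2 *\<^sub>R axis 2 1 + v$3 *\<^sub>R axis 3 1"
proof -
  have "\<forall>k. v $ k = (v$0 *\<^sub>R axis 0 1 + v$1 *\<^sub>R axis 1 1 + v$2 *\<^sub>R axis 2 1 + v$3 *\<^sub>R axis 3 1) $ k"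
  proof
    fix k :: 4
    show "v $ k = (v$0 *\<^sub>R axis 0 1 + v$1 *\<^sub>R axis 1 1 + v$2 *\<^sub>R axis 2 1 + v$3 *\<^sub>R axis 3 1) $ k"
      using idx4[of k] by (elim disjE; hypsubst; simp add: axis_def)
  qed
  then show ?thesis by (subst vec_eq_iff) assumption
qed

lemma wedge_deriv:
  assumes f: "(f has_vector_derivative f') (at t)" and g: "(g has_vector_derivative g') (at t)"
    and h: "(h has_vector_derivative h') (at t)"
  shows "\<exists>D. ((\<lambda>s. wedge (f s) (g s) (h s)) has_vector_derivative D) (at t)"
proof -
  have e: "(\<lambda>s. wedge (f s) (g s) (h s)) = (\<lambda>s. (wedge (f s) (g s) (h s))$0 *\<^sub>R axis 0 1 + (wedge (f s) (g s) (h s))$1 *\<^sub>R axis 1 1 + (wedge (f s) (g s) (h s))$2 *\<^sub>R axis 2 1 + (wedge (f s) (g s) (h s))$3 *\<^sub>R axis 3 1)"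
    by (rule ext) (rule vec4_axis)
  show ?thesis
    unfolding e wedge_comp det3_def
    by (rule exI, (rule derivative_eq_intros comp_deriv[OF f] comp_deriv[OF g] comp_deriv[OF h] refl)+)
qed

lemma deriv_const_open:
  assumes "open I" "t \<in> I" "\<And>s. s \<in> I \<Longrightarrow> h s = c" "(h has_real_derivative D) (at t)"
  shows "D = 0"
proof -
  have "((\<lambda>s. c) has_real_derivative 0) (at t)" by simp
  then have "(h has_real_derivative 0) (at t)"
    by (rule has_field_derivative_transform_within_open[OF _ assms(1,2)]) (simp add: assms(3))
  then show ?thesis using assms(4) DERIV_unique by blast
qed



lemma scalG:
  fixes m mp A Ap N c s r rp :: real
  assumes r: "r \<noteq> 0" "r^2 = m^2 - A^2" "rp * r = m*mp - A*Ap"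
  and cond: "c * (m * Ap - A * mp) = s * A * N * r"
  shows "c/r*Ap + (-(c*rp)/r^2)*A + (m*N/r)*((-s/r)*A) = 0"
proof -
  have "(c/r*Ap + (-(c*rp)/r^2)*A + (m*N/r)*((-s/r)*A)) * r^3 = c*Ap*r^2 - c*A*(rp*r) - m*(s*A*N*r)"
    using r(1) by (simp add: field_simps power2_eq_square power3_eq_cube)
  also have "\<dots> = 0" using r(2,3) cond by algebra
  finally show ?thesis using r(1) by simp
qed

lemma scal1:
  fixes m mp A Ap N c s r rp :: real
  assumes r: "r \<noteq> 0" "r^2 = m^2 - A^2" "rp * r = m*mp - A*Ap"
  and cond: "c * (m * Ap - A * mp) = s * A * N * r"
  shows "-(c/r)*mp + (-(c*rp)/r^2)*(-m) - s*N + (m*N/r)*((-s/r)*(-m)) = 0"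
proof -
  have "(-(c/r)*mp + (-(c*rp)/r^2)*(-m) - s*N + (m*N/r)*((-s/r)*(-m))) * r^3
     = - c*mp*r^2 + c*m*(rp*r) - s*N*r*r^2 + m^2* s*N*r"
    using r(1) by (simp add: field_simps power2_eq_square power3_eq_cube)
  also have "\<dots> = 0" using r(2,3) cond by algebra
  finally show ?thesis using r(1) by simp
qed



lemma n1coef:
  fixes a b ap bp n A x y z :: real
  assumes "A \<noteq> 0" "A^2 = a^2 + b^2"
  shows "(1/A)*((a*(n*y + a*z) + ap*x) + (b*(-n*x + b*z) + bp*y)) + (-((a*ap+b*bp)/A)/A^2)*(a*x + b*y)
     = ((a*bp - ap*b + n*(a^2+b^2))/(a^2+b^2)) * ((1/A)*(-b*x + a*y)) + A*z"
proof -
  have h: "a^2+b^2 = A^2" using assms by simp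
  show ?thesis unfolding h using assms(1)
    apply (simp add: field_simps)
    using assms(2) by algebra
qed

lemma n2coef:
  fixes a b ap bp n A x y z :: real
  assumes "A \<noteq> 0" "A^2 = a^2 + b^2"
  shows "(1/A)*((-b*(n*y + a*z) + (-bp)*x) + (a*(-n*x + b*z) + ap*y)) + (-((a*ap+b*bp)/A)/A^2)*(-b*x + a*y)
     = -((a*bp - ap*b + n*(a^2+b^2))/(a^2+b^2)) * ((1/A)*(a*x + b*y))"
proof -
  have h: "a^2+b^2 = A^2" using assms by simp
  show ?thesis unfolding h using assms(1)
    apply (simp add: field_simps)
    using assms(2) by algebra
qed



lemma smooth_D:
  assumes "smooth_on I f" "t \<in> I"
  shows "(f has_vector_derivative vd f t) (at t)" "(vd f has_vector_derivative vd (vd f) t) (at t)"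
proof -
  have "((vd ^^ 0) f) differentiable (at t)" "((vd ^^ 1) f) differentiable (at t)"
    using assms unfolding smooth_on_def by blast+
  then have d0: "f differentiable (at t)" and d1: "vd f differentiable (at t)" by simp_all
  show "(f has_vector_derivative vd f t) (at t)"
    using d0 vector_derivative_works[of f "at t"] by (simp add: vd_def)
  show "(vd f has_vector_derivative vd (vd f) t) (at t)"
    using d1 vector_derivative_works[of "vd f" "at t"] by (simp add: vd_def[of "vd f"])
qed

lemma main_sing:
  fixes I :: "real set" and \<gamma> v1 v2 :: "real \<Rightarrow> real^4" and t0 \<theta> :: real
  assumes I: "open I" and hf: "hyp_framed_curve I \<gamma> v1 v2"
    and ab0: "\<forall>t\<in>I. (ca \<gamma> v1 v2 t)\<^sup>2 + (cb \<gamma> v1 v2 t)\<^sup>2 \<noteq> 0"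
    and MA: "\<forall>t\<in>I. (cM \<gamma> v1 v2 t)\<^sup>2 > (cA \<gamma> v1 v2 t)\<^sup>2"
    and t0: "t0 \<in> I"
    and cond: "cos \<theta> * (cM \<gamma> v1 v2 t0 * deriv (cA \<gamma> v1 v2) t0 - cA \<gamma> v1 v2 t0 * deriv (cM \<gamma> v1 v2) t0)
       = sin \<theta> * cA \<gamma> v1 v2 t0 * cN \<gamma> v1 v2 t0 * sqrt ((cM \<gamma> v1 v2 t0)\<^sup>2 - (cA \<gamma> v1 v2 t0)\<^sup>2)"
  shows "singular_point (focal_dS \<gamma> v1 v2) (t0, \<theta>)"
proof -
  have sm: "smooth_on I \<gamma>" "smooth_on I v1" "smooth_on I v2" using hf unfolding hyp_framed_curve_def by auto
  have pt: "\<And>t. t \<in> I \<Longrightarrow> lor (\<gamma> t) (\<gamma> t) = -1 \<and> lor (v1 t) (v1 t) = 1 \<and> lor (v2 t) (v2 t) = 1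
      \<and> lor (v1 t) (v2 t) = 0 \<and> lor (\<gamma> t) (v1 t) = 0 \<and> lor (\<gamma> t) (v2 t) = 0"
    using hf unfolding hyp_framed_curve_def H3_def Delta5_def S31_def by auto
  have pt0: "lor (vd \<gamma> t0) (v1 t0) = 0" "lor (vd \<gamma> t0) (v2 t0) = 0"
    using hf t0 unfolding hyp_framed_curve_def by auto
  note dg = smooth_D[OF sm(1) t0] and dv1 = smooth_D[OF sm(2) t0] and dv2 = smooth_D[OF sm(3) t0]
  define G where "G = \<gamma> t0"
  define V1 where "V1 = v1 t0"
  define V2 where "V2 = v2 t0"
  define G' where "G' = vd \<gamma> t0"
  define V1' where "V1' = vd v1 t0"
  define V2' where "V2' = vd v2 t0"
  define U where "U = wedge G V1 V2"
  have U_mu: "mu \<gamma> v1 v2 t0 = U" unfolding U_def mu_def G_def V1_def V2_def ..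
  have rel: "lor G G = -1" "lor V1 V1 = 1" "lor V2 V2 = 1" "lor G V1 = 0" "lor G V2 = 0" "lor V1 V2 = 0"
    using pt[OF t0] unfolding G_def V1_def V2_def by auto
  have d1: "lor G' G + lor G G' = 0" unfolding G_def G'_def
    by (rule deriv_const_open[where c="-1", OF I t0 _ lor_deriv[OF dg(1) dg(1)]]) (use pt in \<open>auto\<close>)
  have d2: "lor V1' V1 + lor V1 V1' = 0" unfolding V1_def V1'_def
    by (rule deriv_const_open[where c="1", OF I t0 _ lor_deriv[OF dv1(1) dv1(1)]]) (use pt in \<open>auto\<close>)
  have d3: "lor V2' V2 + lor V2 V2' = 0" unfolding V2_def V2'_def
    by (rule deriv_const_open[where c="1", OF I t0 _ lor_deriv[OF dv2(1) dv2(1)]]) (use pt in \<open>auto\<close>)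
  have d4: "lor V1' V2 + lor V1 V2' = 0" unfolding V1_def V1'_def V2_def V2'_def
    by (rule deriv_const_open[where c="0", OF I t0 _ lor_deriv[OF dv1(1) dv2(1)]]) (use pt in \<open>auto\<close>)
  have d5: "lor G' V1 + lor G V1' = 0" unfolding G_def G'_def V1_def V1'_def
    by (rule deriv_const_open[where c="0", OF I t0 _ lor_deriv[OF dg(1) dv1(1)]]) (use pt in \<open>auto\<close>)
  have d6: "lor G' V2 + lor G V2' = 0" unfolding G_def G'_def V2_def V2'_def
    by (rule deriv_const_open[where c="0", OF I t0 _ lor_deriv[OF dg(1) dv2(1)]]) (use pt in \<open>auto\<close>)
  have o1: "lor G' V1 = 0" "lor G' V2 = 0" using pt0 unfolding G'_def V1_def V2_def by auto
  note exp = frame_expand[OF rel(1,2,3,4,5,6), folded U_def]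
  define m where "m = cm \<gamma> v1 v2 t0"
  define n where "n = cn \<gamma> v1 v2 t0"
  define a where "a = ca \<gamma> v1 v2 t0"
  define b where "b = cb \<gamma> v1 v2 t0"
  have m_eq: "m = lor G' U" unfolding m_def cm_def U_mu G'_def ..
  have n_eq: "n = lor V1' V2" unfolding n_def cn_def V1'_def V2_def ..
  have a_eq: "a = lor V1' U" unfolding a_def ca_def U_mu V1'_def ..
  have b_eq: "b = lor V2' U" unfolding b_def cb_def U_mu V2'_def ..
  have Gd: "G' = m *\<^sub>R U"
    using exp[of G'] d1 o1 by (simp add: lor_comm[of G G'] m_eq)
  have V1d: "V1' = n *\<^sub>R V2 + a *\<^sub>R U"
    using exp[of V1'] d2 d5 o1 by (simp add: lor_comm[of V1 V1'] lor_comm[of G V1'] lor_comm[of G' V1] n_eq a_eq)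
  have V2d: "V2' = - n *\<^sub>R V1 + b *\<^sub>R U"
  proof -
    have e1: "lor V2' G = 0" using d6 o1 by (simp add: lor_comm[of G V2'])
    have e2: "lor V2' V1 = - n" using d4 by (simp add: lor_comm[of V1 V2'] n_eq)
    have e3: "lor V2' V2 = 0" using d3 by (simp add: lor_comm[of V2 V2'])
    show ?thesis using exp[of V2'] e1 e2 e3 by (simp add: b_eq)
  qed
  have mu_fun: "mu \<gamma> v1 v2 = (\<lambda>t. wedge (\<gamma> t) (v1 t) (v2 t))" by (rule ext) (simp add: mu_def)
  obtain Dmu where Dmu: "(mu \<gamma> v1 v2 has_vector_derivative Dmu) (at t0)"
    using wedge_deriv[OF dg(1) dv1(1) dv2(1)] unfolding mu_fun by blast
  define ap where "ap = deriv (ca \<gamma> v1 v2) t0"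
  define bp where "bp = deriv (cb \<gamma> v1 v2) t0"
  define mp where "mp = deriv (cm \<gamma> v1 v2) t0"
  have ca_d: "(ca \<gamma> v1 v2 has_real_derivative ap) (at t0)"
  proof -
    have f: "ca \<gamma> v1 v2 = (\<lambda>t. lor (vd v1 t) (mu \<gamma> v1 v2 t))" by (rule ext) (simp add: ca_def)
    have "\<exists>D. (ca \<gamma> v1 v2 has_real_derivative D) (at t0)" unfolding f using lor_deriv[OF dv1(2) Dmu] by blast
    then show ?thesis unfolding ap_def using DERIV_deriv_iff_has_field_derivative by blast
  qed
  have cb_d: "(cb \<gamma> v1 v2 has_real_derivative bp) (at t0)"
  proof -
    have f: "cb \<gamma> v1 v2 = (\<lambda>t. lor (vd v2 t) (mu \<gamma> v1 v2 t))" by (rule ext) (simp add: cb_def)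
    have "\<exists>D. (cb \<gamma> v1 v2 has_real_derivative D) (at t0)" unfolding f using lor_deriv[OF dv2(2) Dmu] by blast
    then show ?thesis unfolding bp_def using DERIV_deriv_iff_has_field_derivative by blast
  qed
  have cm_d: "(cm \<gamma> v1 v2 has_real_derivative mp) (at t0)"
  proof -
    have f: "cm \<gamma> v1 v2 = (\<lambda>t. lor (vd \<gamma> t) (mu \<gamma> v1 v2 t))" by (rule ext) (simp add: cm_def)
    have "\<exists>D. (cm \<gamma> v1 v2 has_real_derivative D) (at t0)" unfolding f using lor_deriv[OF dg(2) Dmu] by blast
    then show ?thesis unfolding mp_def using DERIV_deriv_iff_has_field_derivative by blast
  qed
  have cM_fun: "cM \<gamma> v1 v2 = cm \<gamma> v1 v2" by (rule ext) (simp add: cM_def)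
  define A where "A = cA \<gamma> v1 v2 t0"
  have ab_pos: "a^2 + b^2 > 0"
  proof -
    have "a^2 + b^2 \<noteq> 0" using ab0 t0 unfolding a_def b_def by auto
    moreover have "a^2 + b^2 \<ge> 0" by simp
    ultimately show ?thesis by linarith
  qed
  have A_eq: "A = sqrt (a^2+b^2)" unfolding A_def cA_def a_def b_def ..
  have Apos: "A > 0" using ab_pos A_eq by simp
  have A2: "A^2 = a^2+b^2" using ab_pos A_eq by simp
  have MA0: "m^2 > A^2" using MA t0 unfolding m_def A_def cM_def by auto
  define r where "r = sqrt (m^2 - A^2)"
  have rpos: "r > 0" using MA0 unfolding r_def by simp
  have r2: "r^2 = m^2 - A^2" using MA0 unfolding r_def by simp
  define Ap where "Ap = (a*ap+b*bp)/A"
  have sq_d: "((\<lambda>t. (ca \<gamma> v1 v2 t)^2 + (cb \<gamma> v1 v2 t)^2) has_real_derivative (2*a*ap + 2*b*bp)) (at t0)"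
    by (rule derivative_eq_intros ca_d cb_d refl)+ (simp add: a_def b_def)
  have cA_fun: "cA \<gamma> v1 v2 = (\<lambda>t. sqrt ((ca \<gamma> v1 v2 t)^2 + (cb \<gamma> v1 v2 t)^2))" by (rule ext) (simp add: cA_def)
  have cA_d: "(cA \<gamma> v1 v2 has_real_derivative Ap) (at t0)"
  proof -
    have pos: "0 < (ca \<gamma> v1 v2 t0)^2 + (cb \<gamma> v1 v2 t0)^2" using ab_pos unfolding a_def b_def .
    have "DERIV (\<lambda>t. sqrt ((ca \<gamma> v1 v2 t)^2 + (cb \<gamma> v1 v2 t)^2)) t0 :> inverse (sqrt ((ca \<gamma> v1 v2 t0)^2 + (cb \<gamma> v1 v2 t0)^2)) / 2 * (2*a*ap + 2*b*bp)"
      by (rule DERIV_chain2[OF DERIV_real_sqrt[OF pos] sq_d])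
    moreover have "inverse (sqrt ((ca \<gamma> v1 v2 t0)^2 + (cb \<gamma> v1 v2 t0)^2)) / 2 * (2*a*ap + 2*b*bp) = Ap"
      unfolding a_def[symmetric] b_def[symmetric] A_eq[symmetric] Ap_def using Apos by (simp add: field_simps)
    ultimately show ?thesis unfolding cA_fun by (rule DERIV_cong)
  qed
  have cM_d: "(cM \<gamma> v1 v2 has_real_derivative mp) (at t0)" unfolding cM_fun by (rule cm_d)
  have dA: "deriv (cA \<gamma> v1 v2) t0 = Ap" by (rule DERIV_imp_deriv[OF cA_d])
  have dM: "deriv (cM \<gamma> v1 v2) t0 = mp" by (rule DERIV_imp_deriv[OF cM_d])
  have mM: "cM \<gamma> v1 v2 t0 = m" unfolding cM_def m_def ..
  define rp where "rp = (m*mp - A*Ap)/r"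
  have sq2: "((\<lambda>t. (cM \<gamma> v1 v2 t)^2 - (cA \<gamma> v1 v2 t)^2) has_real_derivative (2*m*mp - 2*A*Ap)) (at t0)"
    by (rule derivative_eq_intros cM_d cA_d refl)+ (simp add: mM A_def)
  have r_d: "((\<lambda>t. sqrt ((cM \<gamma> v1 v2 t)^2 - (cA \<gamma> v1 v2 t)^2)) has_real_derivative rp) (at t0)"
  proof -
    have pos: "0 < (cM \<gamma> v1 v2 t0)^2 - (cA \<gamma> v1 v2 t0)^2" using MA0 unfolding mM A_def by simp
    have "DERIV (\<lambda>t. sqrt ((cM \<gamma> v1 v2 t)^2 - (cA \<gamma> v1 v2 t)^2)) t0 :> inverse (sqrt ((cM \<gamma> v1 v2 t0)^2 - (cA \<gamma> v1 v2 t0)^2)) / 2 * (2*m*mp - 2*A*Ap)"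
      by (rule DERIV_chain2[OF DERIV_real_sqrt[OF pos] sq2])
    moreover have "inverse (sqrt ((cM \<gamma> v1 v2 t0)^2 - (cA \<gamma> v1 v2 t0)^2)) / 2 * (2*m*mp - 2*A*Ap) = rp"
      unfolding mM A_def[symmetric] r_def[symmetric] rp_def using rpos by (simp add: field_simps)
    ultimately show ?thesis by (rule DERIV_cong)
  qed
  have i_d: "((\<lambda>t. 1 / cA \<gamma> v1 v2 t) has_real_derivative (-Ap/A^2)) (at t0)"
  proof -
    have "((\<lambda>t. 1 / cA \<gamma> v1 v2 t) has_real_derivative ((0 * cA \<gamma> v1 v2 t0 - 1 * Ap) / (cA \<gamma> v1 v2 t0 * cA \<gamma> v1 v2 t0))) (at t0)"
      by (rule DERIV_divide[OF DERIV_const cA_d]) (use Apos in \<open>simp add: A_def\<close>)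
    then show ?thesis by (rule DERIV_cong) (simp add: A_def[symmetric] power2_eq_square)
  qed
  have p1: "((\<lambda>t. ca \<gamma> v1 v2 t *\<^sub>R v1 t) has_vector_derivative (a *\<^sub>R V1' + ap *\<^sub>R V1)) (at t0)"
    using has_vector_derivative_scaleR[OF ca_d dv1(1)] unfolding a_def V1_def V1'_def .
  have p2: "((\<lambda>t. cb \<gamma> v1 v2 t *\<^sub>R v2 t) has_vector_derivative (b *\<^sub>R V2' + bp *\<^sub>R V2)) (at t0)"
    using has_vector_derivative_scaleR[OF cb_d dv2(1)] unfolding b_def V2_def V2'_def .
  have p3: "((\<lambda>t. - cb \<gamma> v1 v2 t *\<^sub>R v1 t) has_vector_derivative ((-b) *\<^sub>R V1' + (-bp) *\<^sub>R V1)) (at t0)"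
    using has_vector_derivative_scaleR[OF DERIV_minus[OF cb_d] dv1(1)] unfolding b_def V1_def V1'_def .
  have p4: "((\<lambda>t. ca \<gamma> v1 v2 t *\<^sub>R v2 t) has_vector_derivative (a *\<^sub>R V2' + ap *\<^sub>R V2)) (at t0)"
    using has_vector_derivative_scaleR[OF ca_d dv2(1)] unfolding a_def V2_def V2'_def .
  define n1 where "n1 = fn1 \<gamma> v1 v2 t0"
  define n2 where "n2 = fn2 \<gamma> v1 v2 t0"
  have n1_eq: "n1 = (1/A) *\<^sub>R (a *\<^sub>R V1 + b *\<^sub>R V2)" unfolding n1_def fn1_def A_def a_def b_def V1_def V2_def ..
  have n2_eq: "n2 = (1/A) *\<^sub>R (- b *\<^sub>R V1 + a *\<^sub>R V2)" unfolding n2_def fn2_def A_def a_def b_def V1_def V2_def ..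
  define N where "N = cN \<gamma> v1 v2 t0"
  have N_eq: "N = (a*bp - ap*b + n*(a^2+b^2))/(a^2+b^2)"
    unfolding N_def cN_def cf_def a_def[symmetric] b_def[symmetric] n_def[symmetric] ap_def[symmetric] bp_def[symmetric] ..
  have fn1_fun: "fn1 \<gamma> v1 v2 = (\<lambda>t. (1 / cA \<gamma> v1 v2 t) *\<^sub>R (ca \<gamma> v1 v2 t *\<^sub>R v1 t + cb \<gamma> v1 v2 t *\<^sub>R v2 t))"
    by (rule ext) (simp add: fn1_def)
  have fn2_fun: "fn2 \<gamma> v1 v2 = (\<lambda>t. (1 / cA \<gamma> v1 v2 t) *\<^sub>R (- cb \<gamma> v1 v2 t *\<^sub>R v1 t + ca \<gamma> v1 v2 t *\<^sub>R v2 t))"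
    by (rule ext) (simp add: fn2_def)
  have fn1_draw: "(fn1 \<gamma> v1 v2 has_vector_derivative ((1/A) *\<^sub>R ((a *\<^sub>R V1' + ap *\<^sub>R V1) + (b *\<^sub>R V2' + bp *\<^sub>R V2)) + (-Ap/A^2) *\<^sub>R (a *\<^sub>R V1 + b *\<^sub>R V2))) (at t0)"
    using has_vector_derivative_scaleR[OF i_d has_vector_derivative_add[OF p1 p2]]
    unfolding fn1_fun A_def[symmetric] a_def[symmetric] b_def[symmetric] V1_def[symmetric] V2_def[symmetric] .
  have fn2_draw: "(fn2 \<gamma> v1 v2 has_vector_derivative ((1/A) *\<^sub>R (((-b) *\<^sub>R V1' + (-bp) *\<^sub>R V1) + (a *\<^sub>R V2' + ap *\<^sub>R V2)) + (-Ap/A^2) *\<^sub>R (- b *\<^sub>R V1 + a *\<^sub>R V2))) (at t0)"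
    using has_vector_derivative_scaleR[OF i_d has_vector_derivative_add[OF p3 p4]]
    unfolding fn2_fun A_def[symmetric] a_def[symmetric] b_def[symmetric] V1_def[symmetric] V2_def[symmetric] .
  have D1: "(1/A) *\<^sub>R ((a *\<^sub>R V1' + ap *\<^sub>R V1) + (b *\<^sub>R V2' + bp *\<^sub>R V2)) + (-Ap/A^2) *\<^sub>R (a *\<^sub>R V1 + b *\<^sub>R V2) = N *\<^sub>R n2 + A *\<^sub>R U"
  proof -
    have "\<forall>k. ((1/A) *\<^sub>R ((a *\<^sub>R V1' + ap *\<^sub>R V1) + (b *\<^sub>R V2' + bp *\<^sub>R V2)) + (-Ap/A^2) *\<^sub>R (a *\<^sub>R V1 + b *\<^sub>R V2)) $ k = (N *\<^sub>R n2 + A *\<^sub>R U) $ k"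
    proof
      fix k
      have "((1/A) *\<^sub>R ((a *\<^sub>R V1' + ap *\<^sub>R V1) + (b *\<^sub>R V2' + bp *\<^sub>R V2)) + (-Ap/A^2) *\<^sub>R (a *\<^sub>R V1 + b *\<^sub>R V2)) $ k
        = (1/A)*((a*(n*V2$k + a*U$k) + ap*V1$k) + (b*(-n*V1$k + b*U$k) + bp*V2$k)) + (-Ap/A^2)*(a*V1$k + b*V2$k)"
        unfolding V1d V2d by (simp add: algebra_simps)
      also have "\<dots> = ((a*bp - ap*b + n*(a^2+b^2))/(a^2+b^2)) * ((1/A)*(-b*V1$k + a*V2$k)) + A*U$k"
        unfolding Ap_def by (rule n1coef) (use Apos A2 in auto)
      also have "\<dots> = (N *\<^sub>R n2 + A *\<^sub>R U) $ k"
        unfolding N_eq[symmetric] n2_eq by (simp add: algebra_simps)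
      finally show "((1/A) *\<^sub>R ((a *\<^sub>R V1' + ap *\<^sub>R V1) + (b *\<^sub>R V2' + bp *\<^sub>R V2)) + (-Ap/A^2) *\<^sub>R (a *\<^sub>R V1 + b *\<^sub>R V2)) $ k = (N *\<^sub>R n2 + A *\<^sub>R U) $ k" .
    qed
    then show ?thesis by (subst vec_eq_iff) assumption
  qed
  have D2: "(1/A) *\<^sub>R (((-b) *\<^sub>R V1' + (-bp) *\<^sub>R V1) + (a *\<^sub>R V2' + ap *\<^sub>R V2)) + (-Ap/A^2) *\<^sub>R (- b *\<^sub>R V1 + a *\<^sub>R V2) = (-N) *\<^sub>R n1"
  proof -
    have "\<forall>k. ((1/A) *\<^sub>R (((-b) *\<^sub>R V1' + (-bp) *\<^sub>R V1) + (a *\<^sub>R V2' + ap *\<^sub>R V2)) + (-Ap/A^2) *\<^sub>R (- b *\<^sub>R V1 + a *\<^sub>R V2)) $ k = ((-N) *\<^sub>R n1) $ k"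
    proof
      fix k
      have "((1/A) *\<^sub>R (((-b) *\<^sub>R V1' + (-bp) *\<^sub>R V1) + (a *\<^sub>R V2' + ap *\<^sub>R V2)) + (-Ap/A^2) *\<^sub>R (- b *\<^sub>R V1 + a *\<^sub>R V2)) $ k
        = (1/A)*((-b*(n*V2$k + a*U$k) + (-bp)*V1$k) + (a*(-n*V1$k + b*U$k) + ap*V2$k)) + (-Ap/A^2)*(-b*V1$k + a*V2$k)"
        unfolding V1d V2d by (simp add: algebra_simps)
      also have "\<dots> = -((a*bp - ap*b + n*(a^2+b^2))/(a^2+b^2)) * ((1/A)*(a*V1$k + b*V2$k))"
        unfolding Ap_def by (rule n2coef) (use Apos A2 in auto)
      also have "\<dots> = ((-N) *\<^sub>R n1) $ k"
        unfolding N_eq[symmetric] n1_eq by (simp add: algebra_simps)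
      finally show "((1/A) *\<^sub>R (((-b) *\<^sub>R V1' + (-bp) *\<^sub>R V1) + (a *\<^sub>R V2' + ap *\<^sub>R V2)) + (-Ap/A^2) *\<^sub>R (- b *\<^sub>R V1 + a *\<^sub>R V2)) $ k = ((-N) *\<^sub>R n1) $ k" .
    qed
    then show ?thesis by (subst vec_eq_iff) assumption
  qed
  have fn1_d: "(fn1 \<gamma> v1 v2 has_vector_derivative (N *\<^sub>R n2 + A *\<^sub>R U)) (at t0)"
    using fn1_draw unfolding D1 .
  have fn2_d: "(fn2 \<gamma> v1 v2 has_vector_derivative ((-N) *\<^sub>R n1)) (at t0)"
    using fn2_draw unfolding D2 .
  define c where "c = cos \<theta>"
  define s where "s = sin \<theta>"
  have cr_d: "((\<lambda>t. cos \<theta> / sqrt ((cM \<gamma> v1 v2 t)^2 - (cA \<gamma> v1 v2 t)^2)) has_real_derivative (-(c*rp)/r^2)) (at t0)"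
  proof -
    have "((\<lambda>t. cos \<theta> / sqrt ((cM \<gamma> v1 v2 t)^2 - (cA \<gamma> v1 v2 t)^2)) has_real_derivative
       ((0 * sqrt ((cM \<gamma> v1 v2 t0)^2 - (cA \<gamma> v1 v2 t0)^2) - cos \<theta> * rp) / (sqrt ((cM \<gamma> v1 v2 t0)^2 - (cA \<gamma> v1 v2 t0)^2) * sqrt ((cM \<gamma> v1 v2 t0)^2 - (cA \<gamma> v1 v2 t0)^2)))) (at t0)"
      by (rule DERIV_divide[OF DERIV_const r_d]) (use rpos in \<open>simp add: mM A_def[symmetric] r_def[symmetric]\<close>)
    then have "((\<lambda>t. cos \<theta> / sqrt ((cM \<gamma> v1 v2 t)^2 - (cA \<gamma> v1 v2 t)^2)) has_real_derivative
       ((0 * r - cos \<theta> * rp) / (r * r))) (at t0)"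
      unfolding mM A_def[symmetric] r_def[symmetric] .
    then show ?thesis by (rule DERIV_cong) (simp add: c_def power2_eq_square)
  qed
  have inner_d: "((\<lambda>t. cA \<gamma> v1 v2 t *\<^sub>R \<gamma> t - cM \<gamma> v1 v2 t *\<^sub>R fn1 \<gamma> v1 v2 t) has_vector_derivative
      ((A *\<^sub>R G' + Ap *\<^sub>R G) - (m *\<^sub>R (N *\<^sub>R n2 + A *\<^sub>R U) + mp *\<^sub>R n1))) (at t0)"
    using has_vector_derivative_diff[OF has_vector_derivative_scaleR[OF cA_d dg(1)] has_vector_derivative_scaleR[OF cM_d fn1_d]]
    unfolding mM A_def[symmetric] G_def[symmetric] G'_def[symmetric] n1_def[symmetric] .
  define Ftv where "Ftv = (c / r) *\<^sub>R ((A *\<^sub>R G' + Ap *\<^sub>R G) - (m *\<^sub>R (N *\<^sub>R n2 + A *\<^sub>R U) + mp *\<^sub>R n1))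
      + (-(c*rp)/r^2) *\<^sub>R (A *\<^sub>R G - m *\<^sub>R n1) + (s *\<^sub>R ((-N) *\<^sub>R n1) + 0 *\<^sub>R n2)"
  have foc_t: "(\<lambda>t. focal_dS \<gamma> v1 v2 (t, \<theta>)) = (\<lambda>t. (cos \<theta> / sqrt ((cM \<gamma> v1 v2 t)^2 - (cA \<gamma> v1 v2 t)^2)) *\<^sub>R (cA \<gamma> v1 v2 t *\<^sub>R \<gamma> t - cM \<gamma> v1 v2 t *\<^sub>R fn1 \<gamma> v1 v2 t) + sin \<theta> *\<^sub>R fn2 \<gamma> v1 v2 t)"
    by (simp add: focal_dS_def)
  have Ft_d: "((\<lambda>t. focal_dS \<gamma> v1 v2 (t, \<theta>)) has_vector_derivative Ftv) (at t0)"
    using has_vector_derivative_add[OF has_vector_derivative_scaleR[OF cr_d inner_d] has_vector_derivative_scaleR[OF DERIV_const fn2_d]]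
    unfolding foc_t Ftv_def mM A_def[symmetric] r_def[symmetric] G_def[symmetric] n1_def[symmetric] n2_def[symmetric] c_def s_def .
  define Fav where "Fav = (-s / r) *\<^sub>R (A *\<^sub>R G - m *\<^sub>R n1) + c *\<^sub>R n2"
  have foc_a: "(\<lambda>\<phi>. focal_dS \<gamma> v1 v2 (t0, \<phi>)) = (\<lambda>\<phi>. (cos \<phi> / r) *\<^sub>R (A *\<^sub>R G - m *\<^sub>R n1) + sin \<phi> *\<^sub>R n2)"
    by (simp add: focal_dS_def mM A_def[symmetric] r_def[symmetric] G_def n1_def n2_def)
  have cos_d: "((\<lambda>\<phi>. cos \<phi> / r) has_real_derivative (-s / r)) (at \<theta>)"
    using DERIV_cdivide[OF DERIV_cos, of r \<theta>] by (simp add: s_def)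
  have Fa_d: "((\<lambda>\<phi>. focal_dS \<gamma> v1 v2 (t0, \<phi>)) has_vector_derivative Fav) (at \<theta>)"
    using has_vector_derivative_add[OF has_vector_derivative_scaleR[OF cos_d has_vector_derivative_const]
      has_vector_derivative_scaleR[OF DERIV_sin has_vector_derivative_const]]
    unfolding foc_a Fav_def c_def by simp
  have rne: "r \<noteq> 0" using rpos by simp
  have rprel: "rp * r = m*mp - A*Ap" unfolding rp_def using rne by simp
  have cond': "c * (m * Ap - A * mp) = s * A * N * r"
    using cond unfolding c_def s_def mM dA dM A_def[symmetric] N_def[symmetric] r_def[symmetric] .
  define K where "K = m * N / r"
  define eG where "eG = c/r*Ap + (-(c*rp)/r^2)*A + K*((-s/r)*A)"
  define e1 where "e1 = -(c/r)*mp + (-(c*rp)/r^2)*(-m) - s*N + K*((-s/r)*(-m))"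
  have eG0: "eG = 0" unfolding eG_def K_def by (rule scalG[OF rne r2 rprel cond'])
  have e10: "e1 = 0" unfolding e1_def K_def by (rule scal1[OF rne r2 rprel cond'])
  have e20: "-(c/r)*(m*N) + K*c = 0" unfolding K_def by simp
  have fin: "1 *\<^sub>R Ftv + K *\<^sub>R Fav = 0"
  proof -
    have "\<forall>k. (1 *\<^sub>R Ftv + K *\<^sub>R Fav) $ k = (0::real^4) $ k"
    proof
      fix k
      have "(1 *\<^sub>R Ftv + K *\<^sub>R Fav) $ k = eG * G$k + e1 * n1$k + (-(c/r)*(m*N) + K*c) * n2$k + ((c/r)*(A*m) - (c/r)*(m*A)) * U$k"
        unfolding Ftv_def Fav_def eG_def e1_def Gd by (simp add: algebra_simps)
      also have "\<dots> = 0" unfolding eG0 e10 e20 by simp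
      finally show "(1 *\<^sub>R Ftv + K *\<^sub>R Fav) $ k = (0::real^4) $ k" by simp
    qed
    then show ?thesis by (subst vec_eq_iff) assumption
  qed
  show ?thesis unfolding singular_point_def Let_def fst_conv snd_conv
    vector_derivative_at[OF Ft_d] vector_derivative_at[OF Fa_d]
    using fin by (intro exI[of _ 1] exI[of _ K]) simp
qed



lemma exists_theta: "\<exists>\<theta>\<in>{0..2*pi}. cos \<theta> * (p::real) = sin \<theta> * q"
proof (cases "q = 0")
  case True
  then show ?thesis by (intro bexI[of _ "pi/2"]) auto
next
  case False
  define t where "t = arctan (p/q)"
  have ct: "cos t \<noteq> 0" unfolding t_def by simp
  have tt: "tan t = p/q" unfolding t_def by (simp add: tan_arctan)
  have key: "cos t * p = sin t * q"
  proof -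
    have "sin t = p/q * cos t" using tt ct by (simp add: tan_def field_simps)
    then show ?thesis using False by (simp add: field_simps)
  qed
  have bt: "- (pi/2) < t \<and> t < pi/2" unfolding t_def by (rule arctan_bounded)
  show ?thesis
  proof (cases "t \<ge> 0")
    case True
    then show ?thesis using bt key by (intro bexI[of _ t]) auto
  next
    case False
    have "cos (t + pi) * p = sin (t + pi) * q" using key by simp
    moreover have "t + pi \<in> {0..2*pi}" using bt False by auto
    ultimately show ?thesis by blast
  qed
qed

theorem mainTheorem3:
  fixes I :: "real set" and \<gamma> v1 v2 :: "real \<Rightarrow> real^4" and t0 :: real
  assumes "open I" and "is_interval I"
    and "hyp_framed_curve I \<gamma> v1 v2"
    and "\<forall>t\<in>I. (ca \<gamma> v1 v2 t)\<^sup>2 + (cb \<gamma> v1 v2 t)\<^sup>2 \<noteq> 0"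
    and "\<forall>t\<in>I. (cM \<gamma> v1 v2 t)\<^sup>2 > (cA \<gamma> v1 v2 t)\<^sup>2"
    and "t0 \<in> I"
  shows "((cM \<gamma> v1 v2 t0 * deriv (cA \<gamma> v1 v2) t0 - cA \<gamma> v1 v2 t0 * deriv (cM \<gamma> v1 v2) t0,
            cN \<gamma> v1 v2 t0) = (0, 0)
          \<longrightarrow> (\<forall>\<theta>\<in>{0..2*pi}. singular_point (focal_dS \<gamma> v1 v2) (t0, \<theta>)))
       \<and> ((cM \<gamma> v1 v2 t0 * deriv (cA \<gamma> v1 v2) t0 - cA \<gamma> v1 v2 t0 * deriv (cM \<gamma> v1 v2) t0,
            cN \<gamma> v1 v2 t0) \<noteq> (0, 0)
          \<longrightarrow> (\<exists>\<theta>0\<in>{0..2*pi}. singular_point (focal_dS \<gamma> v1 v2) (t0, \<theta>0)))"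
proof -
  note ms = main_sing[OF assms(1,3,4,5,6)]
  have P1: "\<forall>\<theta>\<in>{0..2*pi}. singular_point (focal_dS \<gamma> v1 v2) (t0, \<theta>)"
    if h: "(cM \<gamma> v1 v2 t0 * deriv (cA \<gamma> v1 v2) t0 - cA \<gamma> v1 v2 t0 * deriv (cM \<gamma> v1 v2) t0,
            cN \<gamma> v1 v2 t0) = (0, 0)"
    using h by (auto intro!: ms)
  obtain \<theta>0 where th: "\<theta>0 \<in> {0..2*pi}"
    "cos \<theta>0 * (cM \<gamma> v1 v2 t0 * deriv (cA \<gamma> v1 v2) t0 - cA \<gamma> v1 v2 t0 * deriv (cM \<gamma> v1 v2) t0)
     = sin \<theta>0 * (cA \<gamma> v1 v2 t0 * cN \<gamma> v1 v2 t0 * sqrt ((cM \<gamma> v1 v2 t0)\<^sup>2 - (cA \<gamma> v1 v2 t0)\<^sup>2))"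
    using exists_theta by blast
  have P2: "\<exists>\<theta>0\<in>{0..2*pi}. singular_point (focal_dS \<gamma> v1 v2) (t0, \<theta>0)"
    using th ms[of \<theta>0] by (auto simp: mult.assoc)
  show ?thesis using P1 P2 by blast
qed


end
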